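(* Let $T$ be a binary decision tree (every internal node has exactly two children) of height $h\ge 1$ for a binary classification problem with a favorable and an unfavorable class, in which no internal node has two leaf children predicting the same class (such non-distinguishing splits having been pruned). The PAFER procedure for estimating Statistical Parity of $T$ issues one histogram query for the sensitive-attribute composition of the whole dataset plus one histogram query for each favorable decision rule of $T$, i.e. for each root-to-leaf path ending in a leaf that predicts the favorable class. Then the number $Q$ of queries issued by PAFER satisfies $2 \le Q \le 2^{h-1}+1$.
   Context: The height $h$ of a tree is the maximum number of edges on a root-to-leaf path. A decision rule of a decision tree is the conjunction of the branch conditions along a root-to-leaf path; it is favorable if the leaf it ends in predicts the favorable class. A histogram query asks a data holder, for the set of individuals satisfying a given rule, for the number of individuals in each group of the sensitive attribute. *)

theory Defs
  imports Main
begin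

text \<open>Binary decision trees: an internal node carries a branch condition of type 'c
and has exactly two children; a leaf predicts a class, True = favorable class.\<close>
datatype 'c dtree = Leaf bool | Node 'c "'c dtree" "'c dtree"

fun height :: "'c dtree \<Rightarrow> nat" where
  "height (Leaf _) = 0"
| "height (Node _ l r) = Suc (max (height l) (height r))"

fun pruned :: "'c dtree \<Rightarrow> bool" where
  "pruned (Leaf _) = True"
| "pruned (Node _ l r) =
     ((\<forall>b. \<not> (l = Leaf b \<and> r = Leaf b)) \<and> pruned l \<and> pruned r)"

text \<open>Root-to-leaf paths (decision rules), encoded by the branch conditions taken:
each step records the condition of the node and whether the rule takes it positively
(True = left branch, condition holds) or negatively.\<close>
fun rules :: "'c dtree \<Rightarrow> (('c \<times> bool) list \<times> bool) set" where
  "rules (Leaf b) = {([], b)}"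
| "rules (Node c l r) =
     (\<lambda>(p, b). ((c, True) # p, b)) ` rules l \<union> (\<lambda>(p, b). ((c, False) # p, b)) ` rules r"

definition favorable_rules :: "'c dtree \<Rightarrow> ('c \<times> bool) list set" where
  "favorable_rules t = {p. (p, True) \<in> rules t}"

definition pafer_queries :: "'c dtree \<Rightarrow> nat" where
  "pafer_queries t = 1 + card (favorable_rules t)"

end

theory Submission
  imports Defs
begin

lemma fin_rules: "finite (rules t)"
  by (induction t) auto

lemma fav_leaf: "favorable_rules (Leaf b) = (if b then {[]} else {})"
  by (auto simp: favorable_rules_def)

lemma fav_node: "favorable_rules (Node c l r) =
   ((#) (c, True)) ` favorable_rules l \<union> ((#) (c, False)) ` favorable_rules r"
  unfolding favorable_rules_def by (auto simp: image_iff split: prod.splits)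

lemma fin_fav: "finite (favorable_rules t)"
proof -
  have "favorable_rules t \<subseteq> fst ` rules t" by (force simp: favorable_rules_def)
  thus ?thesis using fin_rules finite_subset by blast
qed

lemma card_node: "card (favorable_rules (Node c l r)) =
   card (favorable_rules l) + card (favorable_rules r)"
proof -
  have "card (favorable_rules (Node c l r)) =
     card (((#) (c, True)) ` favorable_rules l) + card (((#) (c, False)) ` favorable_rules r)"
    unfolding fav_node by (rule card_Un_disjoint) (auto simp: fin_fav)
  also have "\<dots> = card (favorable_rules l) + card (favorable_rules r)"
    by (simp add: card_image)
  finally show ?thesis .
qed

lemma main: "pruned t \<Longrightarrow> height t \<ge> 1 \<Longrightarrow>
   1 \<le> card (favorable_rules t) \<and> card (favorable_rules t) \<le> 2 ^ (height t - 1)"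
proof (induction t)
  case (Leaf b)
  then show ?case by simp
next
  case (Node c l r)
  show ?case
  proof (cases l)
    case (Leaf bl) note L = this
    show ?thesis
    proof (cases r)
      case (Leaf br)
      with L Node.prems have "bl \<noteq> br" by auto
      with L Leaf show ?thesis by (auto simp: card_node fav_leaf)
    next
      case (Node c2 r1 r2)
      hence h: "height r \<ge> 1" by simp
      with Node.IH(2) Node.prems have ih: "1 \<le> card (favorable_rules r)"
        "card (favorable_rules r) \<le> 2 ^ (height r - 1)" by auto
      have "card (favorable_rules l) \<le> 1" using L by (simp add: fav_leaf)
      moreover have "(1::nat) + 2 ^ (height r - 1) \<le> 2 ^ (height r)"
        using h by (metis Suc_diff_le diff_Suc_1 mult_2 one_le_power power_Suc add_right_mono one_le_numeral)
      ultimately show ?thesis using ih L by (simp add: card_node)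
    qed
  next
    case (Node c1 l1 l2) note L = this
    hence hl: "height l \<ge> 1" by simp
    with Node.IH(1) Node.prems have ihl: "1 \<le> card (favorable_rules l)"
        "card (favorable_rules l) \<le> 2 ^ (height l - 1)" by auto
    show ?thesis
    proof (cases r)
      case (Leaf br)
      have "card (favorable_rules r) \<le> 1" using Leaf by (simp add: fav_leaf)
      moreover have "(1::nat) + 2 ^ (height l - 1) \<le> 2 ^ (height l)"
        using hl by (metis Suc_diff_le diff_Suc_1 mult_2 one_le_power power_Suc add_right_mono one_le_numeral)
      moreover have "2 ^ (height l - 1) + (1::nat) \<le> 2 ^ (height l)"
        using calculation(2) by simp
      ultimately show ?thesis using ihl Leaf by (simp add: card_node)
    next
      case (Node c2 r1 r2)
      hence hr: "height r \<ge> 1" by simp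
      with Node.IH(2) Node.prems have ihr: "1 \<le> card (favorable_rules r)"
        "card (favorable_rules r) \<le> 2 ^ (height r - 1)" by auto
      have a: "(2::nat) ^ (height l - 1) \<le> 2 ^ (max (height l) (height r) - 1)"
        by (rule power_increasing) auto
      have b: "(2::nat) ^ (height r - 1) \<le> 2 ^ (max (height l) (height r) - 1)"
        by (rule power_increasing) auto
      have c: "(2::nat) ^ (max (height l) (height r) - 1) + 2 ^ (max (height l) (height r) - 1)
          = 2 ^ (max (height l) (height r))"
        using hl by (metis Suc_diff_le diff_Suc_1 mult_2 power_Suc le_max_iff_disj)
      have "card (favorable_rules l) + card (favorable_rules r) \<le> 2 ^ (max (height l) (height r))"
        using ihl(2) ihr(2) a b c by linarith
      thus ?thesis using ihl(1) by (simp add: card_node)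
    qed
  qed
qed

theorem theorem1:
  fixes T :: "'c dtree"
  assumes "height T \<ge> 1" and "pruned T"
  shows "2 \<le> pafer_queries T \<and> pafer_queries T \<le> 2 ^ (height T - 1) + 1"
  using main[OF assms(2,1)] by (simp add: pafer_queries_def)

end
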